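(* Let $f_1:X_1\to Y_1$ and $f_2:X_2\to Y_2$ be safe maps in $\mathsf{Nom}$. Then $(u_1,u_2)\in X_1\times X_2$ is $(f_1\times f_2)$-safe if and only if $u_i$ is $f_i$-safe for $i=1,2$, $\mathsf{bv}_{f_1}(u_1)\#u_2$, and $\mathsf{bv}_{f_2}(u_2)\#u_1$.
   Context: Nominal sets over a countably infinite set $\mathcal V$ of names; $\mathsf{supp}(u)$ the least finite support; for a finite set $S$ of names, $S\#u$ means $S\cap\mathsf{supp}(u)=\emptyset$; products carry the coordinatewise action. For an equivariant $f:X\to Y$: $u\in X$ is $f$-safe if $|\mathsf{supp}(u)|=\max\{|\mathsf{supp}(v)|:v\in f^{-1}(f(u))\}$ (the maximum existing); $\mathsf{bv}_f(u)=\mathsf{supp}(u)\setminus\mathsf{supp}(f(u))$; $f$ is safe if every element of $Y$ has an $f$-safe preimage. *)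

theory Defs
  imports "HOL-Combinatorics.Perm"
begin

(* Names: the countably infinite set V is represented by nat.
   Finitary permutations of names: the type nat perm (bijections moving finitely many points). *)

type_synonym name = nat

definition perm_action :: "'a set \<Rightarrow> (name perm \<Rightarrow> 'a \<Rightarrow> 'a) \<Rightarrow> bool" where
  "perm_action X act \<longleftrightarrow>
     (\<forall>p x. x \<in> X \<longrightarrow> act p x \<in> X) \<and>
     (\<forall>x\<in>X. act 1 x = x) \<and>
     (\<forall>p q x. x \<in> X \<longrightarrow> act (p * q) x = act p (act q x))"

definition supports :: "(name perm \<Rightarrow> 'a \<Rightarrow> 'a) \<Rightarrow> name set \<Rightarrow> 'a \<Rightarrow> bool" where
  "supports act S x \<longleftrightarrow> (\<forall>p. (\<forall>a\<in>S. Perm.apply p a = a) \<longrightarrow> act p x = x)"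

definition nominal_set :: "'a set \<Rightarrow> (name perm \<Rightarrow> 'a \<Rightarrow> 'a) \<Rightarrow> bool" where
  "nominal_set X act \<longleftrightarrow> perm_action X act \<and> (\<forall>x\<in>X. \<exists>S. finite S \<and> supports act S x)"

(* support = intersection of all finite supports (= least finite support in a nominal set) *)
definition supp :: "(name perm \<Rightarrow> 'a \<Rightarrow> 'a) \<Rightarrow> 'a \<Rightarrow> name set" where
  "supp act x = \<Inter> {S. finite S \<and> supports act S x}"

definition fresh_set :: "name set \<Rightarrow> (name perm \<Rightarrow> 'a \<Rightarrow> 'a) \<Rightarrow> 'a \<Rightarrow> bool" where
  "fresh_set S act u \<longleftrightarrow> S \<inter> supp act u = {}"

definition prod_act :: "(name perm \<Rightarrow> 'a \<Rightarrow> 'a) \<Rightarrow> (name perm \<Rightarrow> 'b \<Rightarrow> 'b) \<Rightarrow> name perm \<Rightarrow> 'a \<times> 'b \<Rightarrow> 'a \<times> 'b" where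
  "prod_act act1 act2 p z = (act1 p (fst z), act2 p (snd z))"

definition equivariant :: "'a set \<Rightarrow> (name perm \<Rightarrow> 'a \<Rightarrow> 'a) \<Rightarrow> 'b set \<Rightarrow> (name perm \<Rightarrow> 'b \<Rightarrow> 'b) \<Rightarrow> ('a \<Rightarrow> 'b) \<Rightarrow> bool" where
  "equivariant X actX Y actY f \<longleftrightarrow>
     (\<forall>x\<in>X. f x \<in> Y) \<and> (\<forall>p x. x \<in> X \<longrightarrow> f (actX p x) = actY p (f x))"

definition f_safe :: "'a set \<Rightarrow> (name perm \<Rightarrow> 'a \<Rightarrow> 'a) \<Rightarrow> ('a \<Rightarrow> 'b) \<Rightarrow> 'a \<Rightarrow> bool" where
  "f_safe X actX f u \<longleftrightarrow> u \<in> X \<and>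
     (\<forall>v\<in>X. f v = f u \<longrightarrow> card (supp actX v) \<le> card (supp actX u))"

definition bv :: "(name perm \<Rightarrow> 'a \<Rightarrow> 'a) \<Rightarrow> (name perm \<Rightarrow> 'b \<Rightarrow> 'b) \<Rightarrow> ('a \<Rightarrow> 'b) \<Rightarrow> 'a \<Rightarrow> name set" where
  "bv actX actY f u = supp actX u - supp actY (f u)"

definition safe_map :: "'a set \<Rightarrow> (name perm \<Rightarrow> 'a \<Rightarrow> 'a) \<Rightarrow> 'b set \<Rightarrow> ('a \<Rightarrow> 'b) \<Rightarrow> bool" where
  "safe_map X actX Y f \<longleftrightarrow> (\<forall>y\<in>Y. \<exists>u. f u = y \<and> f_safe X actX f u)"

end

theory Submission
  imports Defs
begin


lemma swap_fix:
  assumes pa: "perm_action X act" and x: "x \<in> X" and fS: "finite S" and fT: "finite T"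
    and sS: "supports act S x" and sT: "supports act T x"
    and a: "a \<notin> S \<inter> T" and b: "b \<notin> S \<inter> T"
  shows "act (Perm.swap a b) x = x"
proof -
  have one: "\<And>u c. u \<notin> S \<inter> T \<Longrightarrow> c \<notin> S \<union> T \<Longrightarrow> act (Perm.swap u c) x = x"
  proof -
    fix u c assume u: "u \<notin> S \<inter> T" and c: "c \<notin> S \<union> T"
    show "act (Perm.swap u c) x = x"
    proof (cases "u \<in> S")
      case False
      then have "\<forall>z\<in>S. Perm.apply (Perm.swap u c) z = z" using c by (intro ballI apply_swap_same) auto
      then show ?thesis using sS unfolding supports_def by blast
    next
      case True
      then have "u \<notin> T" using u by auto
      then have "\<forall>z\<in>T. Perm.apply (Perm.swap u c) z = z" using c by (intro ballI apply_swap_same) auto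
      then show ?thesis using sT unfolding supports_def by blast
    qed
  qed
  obtain c where c: "c \<notin> S \<union> T \<union> {a, b}"
    using ex_new_if_finite[OF infinite_UNIV_nat, of "S \<union> T \<union> {a,b}"] fS fT by auto
  have ax: "\<And>p q. act (p * q) x = act p (act q x)" using pa x unfolding perm_action_def by blast
  show ?thesis
  proof (cases "a = b")
    case True then show ?thesis using pa x unfolding perm_action_def by simp
  next
    case False
    have eq: "Perm.swap a b = Perm.swap a c * Perm.swap b c * Perm.swap a c"
      by (rule perm_eqI) (use c False in \<open>auto simp: apply_times transpose_def swap.rep_eq\<close>)
    have cx: "c \<notin> S \<union> T" using c by auto
    show ?thesis unfolding eq using one[OF a cx] one[OF b cx] by (simp add: ax)
  qed
qed

lemma supports_inter:
  assumes pa: "perm_action X act" and x: "x \<in> X" and fS: "finite S" and fT: "finite T"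
    and sS: "supports act S x" and sT: "supports act T x"
  shows "supports act (S \<inter> T) x"
  unfolding supports_def
proof (intro allI impI)
  fix p :: "name perm"
  assume "\<forall>a\<in>S \<inter> T. Perm.apply p a = a"
  then show "act p x = x"
  proof (induction "card (affected p)" arbitrary: p rule: less_induct)
    case less
    show ?case
    proof (cases "p = 1")
      case True then show ?thesis using pa x unfolding perm_action_def by auto
    next
      case False
      then obtain a where a: "a \<in> affected p" by (metis affected_empty_iff all_not_in_conv)
      define b where "b = Perm.apply p a"
      have ab: "b \<noteq> a" using a by (simp add: in_affected b_def)
      have pb: "Perm.apply p b \<noteq> b" using ab unfolding b_def by (metis apply_inj)
      define p' where "p' = Perm.swap a b * p"
      have pp: "p = Perm.swap a b * p'" unfolding p'_def by (simp flip: mult.assoc)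
      have sub: "affected p' \<subseteq> affected p - {a}"
      proof
        fix z assume z: "z \<in> affected p'"
        show "z \<in> affected p - {a}"
        proof (rule ccontr)
          assume "z \<notin> affected p - {a}"
          then consider "z = a" | "Perm.apply p z = z" by (auto simp: in_affected)
          then show False
          proof cases
            case 1 then show False using z by (simp add: p'_def in_affected apply_times b_def)
          next
            case 2
            then have "z \<noteq> a" using ab b_def by auto
            moreover have "z \<noteq> b" using 2 pb by auto
            ultimately show False using z 2 by (simp add: p'_def in_affected apply_times)
          qed
        qed
      qed
      have lt: "card (affected p') < card (affected p)"
        by (rule psubset_card_mono) (use sub a in auto)
      have fix': "\<forall>z\<in>S \<inter> T. Perm.apply p' z = z"
        using less.prems sub by (auto simp: in_affected)
      have IH: "act p' x = x" using less.hyps[OF lt fix'] .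
      have anot: "a \<notin> S \<inter> T" using less.prems a by (auto simp: in_affected)
      have bnot: "b \<notin> S \<inter> T" using less.prems pb by auto
      have ax: "\<And>p q. act (p * q) x = act p (act q x)" using pa x unfolding perm_action_def by blast
      show ?thesis unfolding pp ax IH using swap_fix[OF pa x fS fT sS sT anot bnot] .
    qed
  qed
qed



lemma ap_inv1[simp]: "Perm.apply (inverse p) (Perm.apply p a) = a"
  by (simp add: apply_inverse inv_f_f bij_is_inj)
lemma ap_inv2[simp]: "Perm.apply p (Perm.apply (inverse p) a) = a"
  by (simp add: apply_inverse bij_is_surj surj_f_inv_f)
lemma supp_min:
  assumes ns: "nominal_set X act" and x: "x \<in> X"
  shows "finite (supp act x) \<and> supports act (supp act x) x"
proof -
  have pa: "perm_action X act" using ns unfolding nominal_set_def by blast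
  define P where "P S \<longleftrightarrow> finite S \<and> supports act S x" for S
  have ex: "\<exists>S. P S" using ns x unfolding nominal_set_def P_def by blast
  define n where "n = (LEAST n. \<exists>S. P S \<and> card S = n)"
  have "\<exists>S. P S \<and> card S = n" unfolding n_def by (rule LeastI_ex) (use ex in blast)
  then obtain S0 where S0: "P S0" "card S0 = n" by blast
  have minc: "\<And>S. P S \<Longrightarrow> n \<le> card S" unfolding n_def by (rule Least_le) blast
  have le: "\<And>S. P S \<Longrightarrow> S0 \<subseteq> S"
  proof -
    fix S assume PS: "P S"
    have "P (S0 \<inter> S)" using supports_inter[OF pa x, of S0 S] S0 PS unfolding P_def by auto
    then have "card S0 \<le> card (S0 \<inter> S)" using minc S0 by auto
    then have "S0 \<inter> S = S0" using S0(1) unfolding P_def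
      by (metis card_seteq inf_le1)
    then show "S0 \<subseteq> S" by blast
  qed
  have "supp act x = S0" unfolding supp_def
  proof (rule antisym)
    show "\<Inter> {S. finite S \<and> supports act S x} \<subseteq> S0" using S0(1) unfolding P_def by blast
    show "S0 \<subseteq> \<Inter> {S. finite S \<and> supports act S x}" using le unfolding P_def by blast
  qed
  then show ?thesis using S0(1) unfolding P_def by simp
qed



lemma supp_lower: "finite S \<Longrightarrow> supports act S x \<Longrightarrow> supp act x \<subseteq> S"
  unfolding supp_def by blast



lemma supports_image:
  assumes pa: "perm_action X act" and x: "x \<in> X" and s: "supports act S x"
  shows "supports act (Perm.apply p ` S) (act p x)"
  unfolding supports_def
proof (intro allI impI)
  fix q assume q: "\<forall>a\<in>Perm.apply p ` S. Perm.apply q a = a"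
  define r where "r = inverse p * q * p"
  have "\<forall>a\<in>S. Perm.apply r a = a"
  proof
    fix a assume "a \<in> S"
    then have "Perm.apply q (Perm.apply p a) = Perm.apply p a" using q by blast
    then have "Perm.apply r a = Perm.apply (inverse p) (Perm.apply p a)"
      unfolding r_def by (simp add: apply_times)
    also have "\<dots> = a" by simp
    finally show "Perm.apply r a = a" .
  qed
  then have rx: "act r x = x" using s unfolding supports_def by blast
  have "p * r = q * p" unfolding r_def
  proof -
    have "p * (inverse p * q * p) = (p * inverse p) * q * p" by (simp only: mult.assoc)
    then show "p * (inverse p * q * p) = q * p" by simp
  qed
  then have "act q (act p x) = act p (act r x)" using pa x unfolding perm_action_def by metis
  then show "act q (act p x) = act p x" using rx by simp
qed



lemma supp_act:
  assumes ns: "nominal_set X act" and x: "x \<in> X"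
  shows "supp act (act p x) = Perm.apply p ` supp act x"
proof -
  have pa: "perm_action X act" using ns unfolding nominal_set_def by blast
  have px: "act p x \<in> X" using pa x unfolding perm_action_def by blast
  have s1: "\<And>y q. y \<in> X \<Longrightarrow> supp act (act q y) \<subseteq> Perm.apply q ` supp act y"
  proof -
    fix y q assume y: "y \<in> X"
    show "supp act (act q y) \<subseteq> Perm.apply q ` supp act y"
      using supp_lower[OF _ supports_image[OF pa y, of "supp act y" q]] supp_min[OF ns y] by auto
  qed
  have inv: "act (inverse p) (act p x) = x"
    using pa x unfolding perm_action_def by (metis perm.left_inverse)
  have "supp act x \<subseteq> Perm.apply (inverse p) ` supp act (act p x)"
    using s1[OF px, of "inverse p"] inv by simp
  then have "Perm.apply p ` supp act x \<subseteq> Perm.apply p ` Perm.apply (inverse p) ` supp act (act p x)"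
    by (rule image_mono)
  also have "\<dots> = supp act (act p x)" by (simp add: image_image)
  finally show ?thesis using s1[OF x, of p] by blast
qed



lemma supp_equivariant:
  assumes ns: "nominal_set X actX" and eq: "equivariant X actX Y actY f" and x: "x \<in> X"
  shows "supp actY (f x) \<subseteq> supp actX x"
proof (rule supp_lower)
  show "finite (supp actX x)" using supp_min[OF ns x] by blast
  show "supports actY (supp actX x) (f x)" unfolding supports_def
  proof (intro allI impI)
    fix p assume "\<forall>a\<in>supp actX x. Perm.apply p a = a"
    then have "actX p x = x" using supp_min[OF ns x] unfolding supports_def by blast
    then show "actY p (f x) = f x" using eq x unfolding equivariant_def by metis
  qed
qed



lemma supp_pair:
  assumes n1: "nominal_set X1 a1" and n2: "nominal_set X2 a2" and x: "x \<in> X1" and y: "y \<in> X2"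
  shows "supp (prod_act a1 a2) (x, y) = supp a1 x \<union> supp a2 y"
proof (rule antisym)
  show "supp (prod_act a1 a2) (x, y) \<subseteq> supp a1 x \<union> supp a2 y"
  proof (rule supp_lower)
    show "finite (supp a1 x \<union> supp a2 y)" using supp_min[OF n1 x] supp_min[OF n2 y] by blast
    show "supports (prod_act a1 a2) (supp a1 x \<union> supp a2 y) (x, y)"
      using supp_min[OF n1 x] supp_min[OF n2 y] unfolding supports_def prod_act_def by auto
  qed
  show "supp a1 x \<union> supp a2 y \<subseteq> supp (prod_act a1 a2) (x, y)"
    unfolding supp_def[of "prod_act a1 a2"]
  proof (rule Inter_greatest)
    fix S assume "S \<in> {S. finite S \<and> supports (prod_act a1 a2) S (x, y)}"
    then have S: "finite S" "supports (prod_act a1 a2) S (x, y)" by auto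
    have h1: "supports a1 S x" and h2: "supports a2 S y" using S(2) unfolding supports_def prod_act_def by auto
    show "supp a1 x \<union> supp a2 y \<subseteq> S" using supp_lower[OF S(1) h1] supp_lower[OF S(1) h2] by (rule Un_least)
  qed
qed



lemma rename:
  fixes A :: "name set"
  assumes "finite A" and fB: "finite B" and fC: "finite C" and "A \<inter> C = {}"
  shows "\<exists>p. (\<forall>c\<in>C. Perm.apply p c = c) \<and> Perm.apply p ` A \<inter> B = {}"
  using assms(1,4)
proof (induction A rule: finite_induct)
  case empty then show ?case by (intro exI[of _ 1]) simp
next
  case (insert a A)
  then obtain p' where p': "\<forall>c\<in>C. Perm.apply p' c = c" "Perm.apply p' ` A \<inter> B = {}" by auto
  obtain c where c: "c \<notin> insert a A \<union> B \<union> C \<union> affected p'"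
    using ex_new_if_finite[OF infinite_UNIV_nat, of "insert a A \<union> B \<union> C \<union> affected p'"]
      insert fB fC by auto
  define p where "p = p' * Perm.swap a c"
  have "\<forall>z\<in>C. Perm.apply p z = z"
  proof
    fix z assume z: "z \<in> C"
    then have "z \<noteq> a" "z \<noteq> c" using insert.prems c by auto
    then show "Perm.apply p z = z" using p'(1) z by (simp add: p_def apply_times)
  qed
  moreover have "Perm.apply p ` insert a A \<inter> B = {}"
  proof -
    have "Perm.apply p a = c" using c by (auto simp: p_def apply_times in_affected)
    moreover have "\<forall>z\<in>A. Perm.apply p z = Perm.apply p' z"
    proof
      fix z assume z: "z \<in> A"
      then have "z \<noteq> a" "z \<noteq> c" using insert.hyps c by auto
      then show "Perm.apply p z = Perm.apply p' z" by (simp add: p_def apply_times)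
    qed
    ultimately show ?thesis using p'(2) c by auto
  qed
  ultimately show ?case by blast
qed



lemma card3:
  assumes "finite Y" "finite B1" "finite B2"
  shows "card (Y \<union> B1 \<union> B2) \<le> card Y + card B1 + card B2"
    and "card (Y \<union> B1 \<union> B2) = card Y + card B1 + card B2 \<longleftrightarrow>
           Y \<inter> B1 = {} \<and> Y \<inter> B2 = {} \<and> B1 \<inter> B2 = {}"
proof -
  have e1: "card (Y \<union> B1) + card (Y \<inter> B1) = card Y + card B1" using card_Un_Int assms by metis
  have e2: "card (Y \<union> B1 \<union> B2) + card ((Y \<union> B1) \<inter> B2) = card (Y \<union> B1) + card B2"
    using card_Un_Int assms by (metis finite_UnI)
  show "card (Y \<union> B1 \<union> B2) \<le> card Y + card B1 + card B2" using e1 e2 by linarith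
  have "card (Y \<union> B1 \<union> B2) = card Y + card B1 + card B2 \<longleftrightarrow>
           card (Y \<inter> B1) = 0 \<and> card ((Y \<union> B1) \<inter> B2) = 0" using e1 e2 by linarith
  also have "\<dots> \<longleftrightarrow> Y \<inter> B1 = {} \<and> (Y \<union> B1) \<inter> B2 = {}" using assms by simp
  also have "\<dots> \<longleftrightarrow> Y \<inter> B1 = {} \<and> Y \<inter> B2 = {} \<and> B1 \<inter> B2 = {}" by blast
  finally show "card (Y \<union> B1 \<union> B2) = card Y + card B1 + card B2 \<longleftrightarrow>
           Y \<inter> B1 = {} \<and> Y \<inter> B2 = {} \<and> B1 \<inter> B2 = {}" .
qed




theorem lemma5p28:
  fixes X1 :: "'a set" and X2 :: "'b set" and Y1 :: "'c set" and Y2 :: "'d set"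
    and a1 b1 a2 b2 f1 f2 u1 u2
  assumes "nominal_set X1 a1" "nominal_set Y1 b1" "nominal_set X2 a2" "nominal_set Y2 b2"
    and "equivariant X1 a1 Y1 b1 f1" "equivariant X2 a2 Y2 b2 f2"
    and "safe_map X1 a1 Y1 f1" "safe_map X2 a2 Y2 f2"
    and "u1 \<in> X1" "u2 \<in> X2"
  shows "f_safe (X1 \<times> X2) (prod_act a1 a2) (map_prod f1 f2) (u1, u2) \<longleftrightarrow>
           f_safe X1 a1 f1 u1 \<and> f_safe X2 a2 f2 u2 \<and>
           fresh_set (bv a1 b1 f1 u1) a2 u2 \<and> fresh_set (bv a2 b2 f2 u2) a1 u1"
proof -
  note nX1 = assms(1) and nY1 = assms(2) and nX2 = assms(3) and nY2 = assms(4)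
    and e1 = assms(5) and e2 = assms(6) and u1 = assms(9) and u2 = assms(10)
  define T1 where "T1 = supp b1 (f1 u1)"
  define T2 where "T2 = supp b2 (f2 u2)"
  define Y where "Y = T1 \<union> T2"
  define B1 where "B1 v = supp a1 v - T1" for v
  define B2 where "B2 v = supp a2 v - T2" for v
  have y1: "f1 u1 \<in> Y1" using e1 u1 unfolding equivariant_def by blast
  have y2: "f2 u2 \<in> Y2" using e2 u2 unfolding equivariant_def by blast
  have fT1: "finite T1" using supp_min[OF nY1 y1] T1_def by blast
  have fT2: "finite T2" using supp_min[OF nY2 y2] T2_def by blast
  have fY: "finite Y" using fT1 fT2 Y_def by blast
  have fs1: "\<And>v. v \<in> X1 \<Longrightarrow> finite (supp a1 v)" using supp_min[OF nX1] by blast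
  have fs2: "\<And>v. v \<in> X2 \<Longrightarrow> finite (supp a2 v)" using supp_min[OF nX2] by blast
  have sub1: "\<And>v. v \<in> X1 \<Longrightarrow> f1 v = f1 u1 \<Longrightarrow> T1 \<subseteq> supp a1 v"
    unfolding T1_def by (metis supp_equivariant[OF nX1 e1])
  have sub2: "\<And>v. v \<in> X2 \<Longrightarrow> f2 v = f2 u2 \<Longrightarrow> T2 \<subseteq> supp a2 v"
    unfolding T2_def by (metis supp_equivariant[OF nX2 e2])
  have fB1: "\<And>v. v \<in> X1 \<Longrightarrow> finite (B1 v)" by (simp add: B1_def fs1)
  have fB2: "\<And>v. v \<in> X2 \<Longrightarrow> finite (B2 v)" by (simp add: B2_def fs2)
  have c1: "\<And>v. v \<in> X1 \<Longrightarrow> f1 v = f1 u1 \<Longrightarrow> card (supp a1 v) = card T1 + card (B1 v)"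
    unfolding B1_def using sub1 fs1 fT1 by (metis card_Diff_subset card_mono le_add_diff_inverse)
  have c2: "\<And>v. v \<in> X2 \<Longrightarrow> f2 v = f2 u2 \<Longrightarrow> card (supp a2 v) = card T2 + card (B2 v)"
    unfolding B2_def using sub2 fs2 fT2 by (metis card_Diff_subset card_mono le_add_diff_inverse)
  have un: "\<And>v1 v2. v1 \<in> X1 \<Longrightarrow> f1 v1 = f1 u1 \<Longrightarrow> v2 \<in> X2 \<Longrightarrow> f2 v2 = f2 u2 \<Longrightarrow>
      supp a1 v1 \<union> supp a2 v2 = Y \<union> B1 v1 \<union> B2 v2"
    using sub1 sub2 unfolding Y_def B1_def B2_def by blast
  have bv1: "bv a1 b1 f1 u1 = B1 u1" unfolding bv_def B1_def T1_def ..
  have bv2: "bv a2 b2 f2 u2 = B2 u2" unfolding bv_def B2_def T2_def ..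
  have safe_iff: "f_safe (X1 \<times> X2) (prod_act a1 a2) (map_prod f1 f2) (u1, u2) \<longleftrightarrow>
     (\<forall>v1\<in>X1. \<forall>v2\<in>X2. f1 v1 = f1 u1 \<longrightarrow> f2 v2 = f2 u2 \<longrightarrow>
        card (supp a1 v1 \<union> supp a2 v2) \<le> card (supp a1 u1 \<union> supp a2 u2))"
    unfolding f_safe_def using u1 u2 supp_pair[OF nX1 nX2] by auto
  have Kmain: "\<And>v1 v2. v1 \<in> X1 \<Longrightarrow> f1 v1 = f1 u1 \<Longrightarrow> v2 \<in> X2 \<Longrightarrow> f2 v2 = f2 u2 \<Longrightarrow>
      \<exists>w1\<in>X1. \<exists>w2\<in>X2. f1 w1 = f1 u1 \<and> f2 w2 = f2 u2 \<and>
        card (supp a1 w1 \<union> supp a2 w2) = card Y + card (B1 v1) + card (B2 v2)"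
  proof -
    fix v1 v2 assume v1: "v1 \<in> X1" "f1 v1 = f1 u1" and v2: "v2 \<in> X2" "f2 v2 = f2 u2"
    obtain p2 where p2: "\<forall>c\<in>T2. Perm.apply p2 c = c" "Perm.apply p2 ` B2 v2 \<inter> Y = {}"
      using rename[OF fB2[OF v2(1)] fY fT2] unfolding B2_def by blast
    obtain p1 where p1: "\<forall>c\<in>T1. Perm.apply p1 c = c"
        "Perm.apply p1 ` B1 v1 \<inter> (Y \<union> Perm.apply p2 ` B2 v2) = {}"
      using rename[OF fB1[OF v1(1)] _ fT1, of "Y \<union> Perm.apply p2 ` B2 v2"] fY fB2[OF v2(1)]
      unfolding B1_def by blast
    define w1 where "w1 = a1 p1 v1"
    define w2 where "w2 = a2 p2 v2"
    have w1: "w1 \<in> X1" using v1 nX1 unfolding w1_def nominal_set_def perm_action_def by blast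
    have w2: "w2 \<in> X2" using v2 nX2 unfolding w2_def nominal_set_def perm_action_def by blast
    have fw1: "f1 w1 = f1 u1"
    proof -
      have "f1 w1 = b1 p1 (f1 u1)" using e1 v1 unfolding w1_def equivariant_def by metis
      also have "\<dots> = f1 u1" using supp_min[OF nY1 y1] p1(1) unfolding T1_def supports_def by blast
      finally show ?thesis .
    qed
    have fw2: "f2 w2 = f2 u2"
    proof -
      have "f2 w2 = b2 p2 (f2 u2)" using e2 v2 unfolding w2_def equivariant_def by metis
      also have "\<dots> = f2 u2" using supp_min[OF nY2 y2] p2(1) unfolding T2_def supports_def by blast
      finally show ?thesis .
    qed
    have s1: "supp a1 w1 = T1 \<union> Perm.apply p1 ` B1 v1"
    proof -
      have "supp a1 w1 = Perm.apply p1 ` (T1 \<union> B1 v1)"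
        unfolding w1_def supp_act[OF nX1 v1(1)] using sub1[OF v1] B1_def
        by (metis Diff_partition)
      also have "\<dots> = T1 \<union> Perm.apply p1 ` B1 v1" using p1(1) by (auto simp: image_Un)
      finally show ?thesis .
    qed
    have s2: "supp a2 w2 = T2 \<union> Perm.apply p2 ` B2 v2"
    proof -
      have "supp a2 w2 = Perm.apply p2 ` (T2 \<union> B2 v2)"
        unfolding w2_def supp_act[OF nX2 v2(1)] using sub2[OF v2] B2_def
        by (metis Diff_partition)
      also have "\<dots> = T2 \<union> Perm.apply p2 ` B2 v2" using p2(1) by (auto simp: image_Un)
      finally show ?thesis .
    qed
    have inj: "\<And>p :: name perm. inj (Perm.apply p)" by (simp add: bij_is_inj)
    have cc1: "card (Perm.apply p1 ` B1 v1) = card (B1 v1)" using inj card_image by (metis inj_on_subset subset_UNIV)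
    have cc2: "card (Perm.apply p2 ` B2 v2) = card (B2 v2)" using inj card_image by (metis inj_on_subset subset_UNIV)
    have "supp a1 w1 \<union> supp a2 w2 = Y \<union> Perm.apply p1 ` B1 v1 \<union> Perm.apply p2 ` B2 v2"
      unfolding s1 s2 Y_def by blast
    moreover have "card (Y \<union> Perm.apply p1 ` B1 v1 \<union> Perm.apply p2 ` B2 v2)
        = card Y + card (Perm.apply p1 ` B1 v1) + card (Perm.apply p2 ` B2 v2)"
      using card3(2)[OF fY finite_imageI[OF fB1[OF v1(1)]] finite_imageI[OF fB2[OF v2(1)]]] p1(2) p2(2)
      by blast
    ultimately show "\<exists>w1\<in>X1. \<exists>w2\<in>X2. f1 w1 = f1 u1 \<and> f2 w2 = f2 u2 \<and>
        card (supp a1 w1 \<union> supp a2 w2) = card Y + card (B1 v1) + card (B2 v2)"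
      using w1 w2 fw1 fw2 cc1 cc2 by metis
  qed
  have Uu: "supp a1 u1 \<union> supp a2 u2 = Y \<union> B1 u1 \<union> B2 u2" using un u1 u2 by blast
  have c3u: "card (Y \<union> B1 u1 \<union> B2 u2) \<le> card Y + card (B1 u1) + card (B2 u2)"
    using card3(1)[OF fY fB1[OF u1] fB2[OF u2]] .
  have s2u: "supp a2 u2 \<subseteq> Y \<union> B2 u2" unfolding Y_def B2_def by blast
  have s1u: "supp a1 u1 \<subseteq> Y \<union> B1 u1" unfolding Y_def B1_def by blast
  show ?thesis
  proof
    assume S: "f_safe (X1 \<times> X2) (prod_act a1 a2) (map_prod f1 f2) (u1, u2)"
    have H: "\<And>v1 v2. v1 \<in> X1 \<Longrightarrow> f1 v1 = f1 u1 \<Longrightarrow> v2 \<in> X2 \<Longrightarrow> f2 v2 = f2 u2 \<Longrightarrow>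
      card Y + card (B1 v1) + card (B2 v2) \<le> card (Y \<union> B1 u1 \<union> B2 u2)"
    proof -
      fix v1 v2 assume a: "v1 \<in> X1" "f1 v1 = f1 u1" "v2 \<in> X2" "f2 v2 = f2 u2"
      obtain w1 w2 where w: "w1 \<in> X1" "w2 \<in> X2" "f1 w1 = f1 u1" "f2 w2 = f2 u2"
        "card (supp a1 w1 \<union> supp a2 w2) = card Y + card (B1 v1) + card (B2 v2)"
        using Kmain[OF a] by blast
      show "card Y + card (B1 v1) + card (B2 v2) \<le> card (Y \<union> B1 u1 \<union> B2 u2)"
        using S[unfolded safe_iff] w Uu by metis
    qed
    have eq: "card (Y \<union> B1 u1 \<union> B2 u2) = card Y + card (B1 u1) + card (B2 u2)"
      using H[OF u1 refl u2 refl] c3u by linarith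
    have dis: "Y \<inter> B1 u1 = {} \<and> Y \<inter> B2 u2 = {} \<and> B1 u1 \<inter> B2 u2 = {}"
      using card3(2)[OF fY fB1[OF u1] fB2[OF u2]] eq by blast
    have sf1: "f_safe X1 a1 f1 u1" unfolding f_safe_def
    proof (intro conjI ballI impI)
      fix v assume v: "v \<in> X1" "f1 v = f1 u1"
      have "card (B1 v) \<le> card (B1 u1)" using H[OF v u2 refl] eq by linarith
      then show "card (supp a1 v) \<le> card (supp a1 u1)" using c1[OF v] c1[OF u1 refl] by linarith
    qed (rule u1)
    have sf2: "f_safe X2 a2 f2 u2" unfolding f_safe_def
    proof (intro conjI ballI impI)
      fix v assume v: "v \<in> X2" "f2 v = f2 u2"
      have "card (B2 v) \<le> card (B2 u2)" using H[OF u1 refl v] eq by linarith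
      then show "card (supp a2 v) \<le> card (supp a2 u2)" using c2[OF v] c2[OF u2 refl] by linarith
    qed (rule u2)
    show "f_safe X1 a1 f1 u1 \<and> f_safe X2 a2 f2 u2 \<and>
           fresh_set (bv a1 b1 f1 u1) a2 u2 \<and> fresh_set (bv a2 b2 f2 u2) a1 u1"
      using sf1 sf2 dis s1u s2u unfolding fresh_set_def bv1 bv2 by blast
  next
    assume R: "f_safe X1 a1 f1 u1 \<and> f_safe X2 a2 f2 u2 \<and>
           fresh_set (bv a1 b1 f1 u1) a2 u2 \<and> fresh_set (bv a2 b2 f2 u2) a1 u1"
    have dis: "Y \<inter> B1 u1 = {} \<and> Y \<inter> B2 u2 = {} \<and> B1 u1 \<inter> B2 u2 = {}"
    proof -
      have "B1 u1 \<inter> supp a2 u2 = {}" "B2 u2 \<inter> supp a1 u1 = {}"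
        using R unfolding fresh_set_def bv1 bv2 by auto
      moreover have "T2 \<subseteq> supp a2 u2" "T1 \<subseteq> supp a1 u1" using sub1 sub2 u1 u2 by auto
      moreover have "B2 u2 \<subseteq> supp a2 u2" unfolding B2_def by blast
      ultimately show ?thesis unfolding Y_def B1_def B2_def by blast
    qed
    have eq: "card (supp a1 u1 \<union> supp a2 u2) = card Y + card (B1 u1) + card (B2 u2)"
      using card3(2)[OF fY fB1[OF u1] fB2[OF u2]] dis Uu by simp
    show "f_safe (X1 \<times> X2) (prod_act a1 a2) (map_prod f1 f2) (u1, u2)"
      unfolding safe_iff
    proof (intro ballI impI)
      fix v1 v2 assume v: "v1 \<in> X1" "v2 \<in> X2" "f1 v1 = f1 u1" "f2 v2 = f2 u2"
      have b1: "card (B1 v1) \<le> card (B1 u1)"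
        using R c1[OF v(1,3)] c1[OF u1 refl] v unfolding f_safe_def by force
      have b2: "card (B2 v2) \<le> card (B2 u2)"
        using R c2[OF v(2,4)] c2[OF u2 refl] v unfolding f_safe_def by force
      have "card (supp a1 v1 \<union> supp a2 v2) \<le> card Y + card (B1 v1) + card (B2 v2)"
        unfolding un[OF v(1,3,2,4)] using card3(1)[OF fY fB1[OF v(1)] fB2[OF v(2)]] .
      then show "card (supp a1 v1 \<union> supp a2 v2) \<le> card (supp a1 u1 \<union> supp a2 u2)"
        using eq b1 b2 by linarith
    qed
  qed
qed


end
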